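(* There is a norm $\|\cdot\|$ on $c_{00}$ satisfying, for every $x\in c_{00}$, the implicit equation $$\|x\|=\max\Big\{\|x\|_\infty,\ \sup\Big\{\frac1{f(\ell)}\sum_{i=1}^\ell |||E_ix|||_{m_i}:\ \ell\in\mathbb{N},\ ((m_i,E_i))_{i=1}^\ell\ \text{admissible}\Big\}\Big\},$$ where for $m\ge2$, $|||\cdot|||_m$ is the norm on $c_{00}$ given by $|||x|||_m=\sup\{\frac1m\sum_{i=1}^m\|F_ix\|:F_1<\cdots<F_m\}$.
   Context: $c_{00}$ is the space of finitely supported real sequences on $\mathbb{N}$; $\|x\|_\infty=\max_i|x(i)|$. For $t>0$, $f(t)=\log_2(t+1)$. For $E,F\subseteq\mathbb{N}$, $E<F$ means $\max E<\min F$, and $Ex$ is the restriction of $x$ to $E$ ($Ex(i)=x(i)$ for $i\in E$, $0$ otherwise). A finite sequence of pairs $((m_i,E_i))_{i=1}^k$, with integers $m_1<\cdots<m_k$ and finite subsets $E_1<\cdots<E_k$ of $\mathbb{N}$, is admissible if $m_1\ge2$ and $f(m_{i+1})>\sum_{j=1}^i|E_j|$ for $1\le i<k$. *)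

theory Defs
  imports Complex_Main
begin

definition c00 :: "(nat \<Rightarrow> real) set" where
  "c00 = {x. finite {i. x i \<noteq> 0}}"

definition supnorm :: "(nat \<Rightarrow> real) \<Rightarrow> real" where
  "supnorm x = Max (insert 0 ((\<lambda>i. \<bar>x i\<bar>) ` {i. x i \<noteq> 0}))"

definition fdef :: "real \<Rightarrow> real" where
  "fdef t = log 2 (t + 1)"

definition restr :: "nat set \<Rightarrow> (nat \<Rightarrow> real) \<Rightarrow> (nat \<Rightarrow> real)" where
  "restr E x = (\<lambda>i. if i \<in> E then x i else 0)"

definition set_less :: "nat set \<Rightarrow> nat set \<Rightarrow> bool" where
  "set_less E F \<longleftrightarrow> finite E \<and> finite F \<and> E \<noteq> {} \<and> F \<noteq> {} \<and> Max E < Min F"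

definition block_seq :: "nat \<Rightarrow> (nat \<Rightarrow> nat set) \<Rightarrow> bool" where
  "block_seq m F \<longleftrightarrow> (\<forall>i\<in>{1..m}. finite (F i) \<and> F i \<noteq> {}) \<and>
     (\<forall>i\<in>{1..<m}. set_less (F i) (F (Suc i)))"

definition tnorm :: "((nat \<Rightarrow> real) \<Rightarrow> real) \<Rightarrow> nat \<Rightarrow> (nat \<Rightarrow> real) \<Rightarrow> real" where
  "tnorm N m x = Sup {(\<Sum>i=1..m. N (restr (F i) x)) / real m | F. block_seq m F}"

definition admissible :: "nat \<Rightarrow> (nat \<Rightarrow> nat) \<Rightarrow> (nat \<Rightarrow> nat set) \<Rightarrow> bool" where
  "admissible k m E \<longleftrightarrow> k \<ge> 1 \<and> m 1 \<ge> 2 \<and>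
     (\<forall>i\<in>{1..<k}. m i < m (Suc i)) \<and> block_seq k E \<and>
     (\<forall>i\<in>{1..<k}. fdef (real (m (Suc i))) > real (\<Sum>j=1..i. card (E j)))"

definition adm_set :: "((nat \<Rightarrow> real) \<Rightarrow> real) \<Rightarrow> (nat \<Rightarrow> real) \<Rightarrow> real set" where
  "adm_set N x = {(\<Sum>i=1..k. tnorm N (m i) (restr (E i) x)) / fdef (real k) | k m E.
                    admissible k m E}"

definition is_norm_c00 :: "((nat \<Rightarrow> real) \<Rightarrow> real) \<Rightarrow> bool" where
  "is_norm_c00 N \<longleftrightarrow>
     (\<forall>x\<in>c00. N x \<ge> 0 \<and> (N x = 0 \<longleftrightarrow> x = (\<lambda>_. 0))) \<and>
     (\<forall>x\<in>c00. \<forall>c. N (\<lambda>i. c * x i) = \<bar>c\<bar> * N x) \<and>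
     (\<forall>x\<in>c00. \<forall>y\<in>c00. N (\<lambda>i. x i + y i) \<le> N x + N y)"

end

theory Submission
  imports Defs
begin

lemma c00_restr: "x \<in> c00 \<Longrightarrow> restr E x \<in> c00"
  unfolding c00_def restr_def by (auto elim: rev_finite_subset)

lemma c00_scale: "x \<in> c00 \<Longrightarrow> (\<lambda>i. c * x i) \<in> c00"
  unfolding c00_def by (auto elim: rev_finite_subset)

lemma c00_add: "x \<in> c00 \<Longrightarrow> y \<in> c00 \<Longrightarrow> (\<lambda>i. x i + y i) \<in> c00"
proof -
  assume a: "x \<in> c00" "y \<in> c00"
  have "{i. x i + y i \<noteq> 0} \<subseteq> {i. x i \<noteq> 0} \<union> {i. y i \<noteq> 0}" by auto
  moreover have "finite ({i. x i \<noteq> 0} \<union> {i. y i \<noteq> 0})" using a unfolding c00_def by simp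
  ultimately have "finite {i. x i + y i \<noteq> 0}" by (rule finite_subset)
  then show ?thesis unfolding c00_def by simp
qed

lemma supnorm_ge: "x \<in> c00 \<Longrightarrow> \<bar>x i\<bar> \<le> supnorm x"
  unfolding supnorm_def c00_def
  by (cases "x i = 0") (auto intro: Max_ge)

lemma supnorm_nonneg: "x \<in> c00 \<Longrightarrow> 0 \<le> supnorm x"
  unfolding supnorm_def c00_def by (auto intro: Max_ge)

lemma supnorm_le: "x \<in> c00 \<Longrightarrow> 0 \<le> B \<Longrightarrow> (\<And>i. \<bar>x i\<bar> \<le> B) \<Longrightarrow> supnorm x \<le> B"
  unfolding supnorm_def c00_def by (auto)

lemma supnorm_zero: "x \<in> c00 \<Longrightarrow> supnorm x = 0 \<Longrightarrow> x = (\<lambda>_. 0)"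
proof (rule ccontr)
  assume a: "x \<in> c00" "supnorm x = 0" "x \<noteq> (\<lambda>_. 0)"
  then obtain i where "x i \<noteq> 0" by auto
  with supnorm_ge[OF a(1), of i] a(2) show False by auto
qed

definition l1 :: "(nat \<Rightarrow> real) \<Rightarrow> real" where
  "l1 x = (\<Sum>i\<in>{i. x i \<noteq> 0}. \<bar>x i\<bar>)"

lemma l1_eq: "finite A \<Longrightarrow> {i. x i \<noteq> 0} \<subseteq> A \<Longrightarrow> l1 x = (\<Sum>i\<in>A. \<bar>x i\<bar>)"
  unfolding l1_def by (rule sum.mono_neutral_left) auto

lemma l1_nonneg: "0 \<le> l1 x"
  unfolding l1_def by (simp add: sum_nonneg)

lemma supnorm_le_l1: "x \<in> c00 \<Longrightarrow> supnorm x \<le> l1 x"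
proof (rule supnorm_le)
  fix i assume "x \<in> c00"
  then show "\<bar>x i\<bar> \<le> l1 x" unfolding l1_def c00_def
    by (cases "x i = 0") (auto intro: member_le_sum sum_nonneg)
qed (auto simp: l1_nonneg)

lemma block_less:
  assumes b: "block_seq m F" and j: "1 \<le> j" "j < j'" "j' \<le> m"
  shows "Max (F j) < Min (F j')"
  using j
proof (induction j')
  case 0 then show ?case by simp
next
  case (Suc j'')
  have sl: "set_less (F j'') (F (Suc j''))" using b Suc.prems unfolding block_seq_def by auto
  show ?case
  proof (cases "j'' = j")
    case True then show ?thesis using sl unfolding set_less_def by simp
  next
    case False
    then have "Max (F j) < Min (F j'')" using Suc by auto
    moreover have "Min (F j'') \<le> Max (F j'')" using sl unfolding set_less_def
      by (meson Max_ge Min_in)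
    moreover have "Max (F j'') < Min (F (Suc j''))" using sl unfolding set_less_def by blast
    ultimately show ?thesis by linarith
  qed
qed

lemma block_disj:
  assumes b: "block_seq m F" and j: "j \<in> {1..m}" "j' \<in> {1..m}" "i \<in> F j" "i \<in> F j'"
  shows "j = j'"
proof (rule ccontr)
  assume ne: "j \<noteq> j'"
  have fin: "\<And>j. j \<in> {1..m} \<Longrightarrow> finite (F j)" using b unfolding block_seq_def by auto
  { fix a c assume "a \<in> {1..m}" "c \<in> {1..m}" "a < c" "i \<in> F a" "i \<in> F c"
    then have "Max (F a) < Min (F c)" using block_less[OF b] by auto
    moreover have "i \<le> Max (F a)" using fin \<open>a \<in> _\<close> \<open>i \<in> F a\<close> by auto
    moreover have "Min (F c) \<le> i" using fin \<open>c \<in> _\<close> \<open>i \<in> F c\<close> by auto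
    ultimately have False by simp }
  then show False using j ne by (cases "j < j'") (auto simp: not_less_iff_gr_or_eq)
qed

lemma l1_block:
  assumes b: "block_seq m F" and y: "y \<in> c00"
  shows "(\<Sum>j=1..m. l1 (restr (F j) y)) \<le> l1 y"
proof -
  define A where "A = {i. y i \<noteq> 0}"
  have fA: "finite A" using y unfolding A_def c00_def by auto
  have "(\<Sum>j=1..m. l1 (restr (F j) y)) = (\<Sum>j=1..m. \<Sum>i\<in>A. \<bar>restr (F j) y i\<bar>)"
    by (rule sum.cong[OF refl], rule l1_eq[OF fA]) (auto simp: A_def restr_def)
  also have "\<dots> = (\<Sum>i\<in>A. \<Sum>j=1..m. \<bar>restr (F j) y i\<bar>)" by (rule sum.swap)
  also have "\<dots> \<le> (\<Sum>i\<in>A. \<bar>y i\<bar>)"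
  proof (rule sum_mono)
    fix i assume "i \<in> A"
    show "(\<Sum>j=1..m. \<bar>restr (F j) y i\<bar>) \<le> \<bar>y i\<bar>"
    proof (cases "\<exists>j0\<in>{1..m}. i \<in> F j0")
      case True
      then obtain j0 where j0: "j0 \<in> {1..m}" "i \<in> F j0" by auto
      have "(\<Sum>j=1..m. \<bar>restr (F j) y i\<bar>) = \<bar>restr (F j0) y i\<bar> + (\<Sum>j\<in>{1..m}-{j0}. \<bar>restr (F j) y i\<bar>)"
        using j0 by (simp add: sum.remove)
      also have "(\<Sum>j\<in>{1..m}-{j0}. \<bar>restr (F j) y i\<bar>) = 0"
        using block_disj[OF b _ j0(1) _ j0(2)] by (intro sum.neutral) (auto simp: restr_def)
      finally show ?thesis using j0 by (simp add: restr_def)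
    next
      case False
      then show ?thesis by (simp add: restr_def)
    qed
  qed
  also have "\<dots> = l1 y" by (simp add: l1_def A_def)
  finally show ?thesis .
qed


definition good :: "((nat \<Rightarrow> real) \<Rightarrow> real) \<Rightarrow> bool" where
  "good N \<longleftrightarrow> (\<forall>x\<in>c00. supnorm x \<le> N x \<and> N x \<le> l1 x \<and>
      (\<forall>c. N (\<lambda>i. c * x i) = \<bar>c\<bar> * N x) \<and>
      (\<forall>y\<in>c00. N (\<lambda>i. x i + y i) \<le> N x + N y))"

lemma goodD:
  assumes "good N" "x \<in> c00"
  shows "supnorm x \<le> N x" "N x \<le> l1 x" "N (\<lambda>i. c * x i) = \<bar>c\<bar> * N x"
    "y \<in> c00 \<Longrightarrow> N (\<lambda>i. x i + y i) \<le> N x + N y" "0 \<le> N x"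
  using assms supnorm_nonneg[OF assms(2)] unfolding good_def by (auto intro: order_trans)

lemma homog_from_le:
  assumes nn: "\<And>x. x \<in> c00 \<Longrightarrow> 0 \<le> T x"
    and le: "\<And>x c. x \<in> c00 \<Longrightarrow> T (\<lambda>i. c * x i) \<le> \<bar>c\<bar> * T x"
    and x: "x \<in> c00"
  shows "T (\<lambda>i. c * x i) = \<bar>c\<bar> * T x"
proof (cases "c = 0")
  case True
  then show ?thesis using le[OF x, of 0] nn[OF c00_scale[OF x, of 0]] by simp
next
  case False
  have "T x = T (\<lambda>i. (1/c) * (c * x i))" using False by simp
  also have "\<dots> \<le> \<bar>1/c\<bar> * T (\<lambda>i. c * x i)" by (rule le[OF c00_scale[OF x]])
  finally have "\<bar>c\<bar> * T x \<le> T (\<lambda>i. c * x i)" using False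
    by (simp add: field_simps abs_mult) 
  then show ?thesis using le[OF x, of c] by simp
qed

lemma restr_scale: "restr E (\<lambda>i. c * x i) = (\<lambda>i. c * restr E x i)"
  by (auto simp: restr_def)

lemma restr_add: "restr E (\<lambda>i. x i + y i) = (\<lambda>i. restr E x i + restr E y i)"
  by (auto simp: restr_def)

abbreviation TS where
  "TS N m y \<equiv> {(\<Sum>i=1..m. N (restr (F i) y)) / real m | F. block_seq m F}"

lemma block_single: "block_seq m (\<lambda>j. {j})"
  unfolding block_seq_def set_less_def by auto

lemma tn_elem:
  assumes g: "good N" and y: "y \<in> c00" and b: "block_seq m F"
  shows "0 \<le> (\<Sum>i=1..m. N (restr (F i) y)) / real m"
    "(\<Sum>i=1..m. N (restr (F i) y)) / real m \<le> l1 y"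
proof -
  have nn: "0 \<le> (\<Sum>i=1..m. N (restr (F i) y))"
    by (rule sum_nonneg) (rule goodD(5)[OF g c00_restr[OF y]])
  then show "0 \<le> (\<Sum>i=1..m. N (restr (F i) y)) / real m" by simp
  have "(\<Sum>i=1..m. N (restr (F i) y)) \<le> (\<Sum>i=1..m. l1 (restr (F i) y))"
    by (rule sum_mono) (rule goodD(2)[OF g c00_restr[OF y]])
  also have "\<dots> \<le> l1 y" by (rule l1_block[OF b y])
  finally have le: "(\<Sum>i=1..m. N (restr (F i) y)) \<le> l1 y" .
  show "(\<Sum>i=1..m. N (restr (F i) y)) / real m \<le> l1 y"
  proof (cases "m = 0")
    case True then show ?thesis by (simp add: l1_nonneg)
  next
    case False
    then have "(\<Sum>i=1..m. N (restr (F i) y)) / real m \<le> (\<Sum>i=1..m. N (restr (F i) y))"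
      using nn by (simp add: divide_le_eq mult_le_cancel_left1)
    then show ?thesis using le by linarith
  qed
qed

lemma tn_upper:
  assumes g: "good N" and y: "y \<in> c00" and b: "block_seq m F"
  shows "(\<Sum>i=1..m. N (restr (F i) y)) / real m \<le> tnorm N m y"
  unfolding tnorm_def
  by (rule cSup_upper) (use b tn_elem(2)[OF g y] in \<open>auto simp: bdd_above_def\<close>)

lemma tn_least:
  assumes "\<And>F. block_seq m F \<Longrightarrow> (\<Sum>i=1..m. N (restr (F i) y)) / real m \<le> B"
  shows "tnorm N m y \<le> B"
  unfolding tnorm_def
  by (rule cSup_least) (use assms block_single in auto)

lemma tn_nonneg: "good N \<Longrightarrow> y \<in> c00 \<Longrightarrow> 0 \<le> tnorm N m y"
  using tn_upper[OF _ _ block_single] tn_elem(1)[OF _ _ block_single] by (meson order_trans)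

lemma tn_l1: "good N \<Longrightarrow> y \<in> c00 \<Longrightarrow> tnorm N m y \<le> l1 y"
  by (rule tn_least) (rule tn_elem(2))

lemma tn_scale_le:
  assumes g: "good N" and y: "y \<in> c00"
  shows "tnorm N m (\<lambda>i. c * y i) \<le> \<bar>c\<bar> * tnorm N m y"
proof (rule tn_least)
  fix F assume b: "block_seq m F"
  have "(\<Sum>i=1..m. N (restr (F i) (\<lambda>i. c * y i))) / real m
      = \<bar>c\<bar> * ((\<Sum>i=1..m. N (restr (F i) y)) / real m)"
    by (simp add: restr_scale goodD(3)[OF g c00_restr[OF y]] sum_distrib_left)
  also have "\<dots> \<le> \<bar>c\<bar> * tnorm N m y"
    by (rule mult_left_mono[OF tn_upper[OF g y b]]) simp
  finally show "(\<Sum>i=1..m. N (restr (F i) (\<lambda>i. c * y i))) / real m \<le> \<bar>c\<bar> * tnorm N m y" .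
qed

lemma tn_tri:
  assumes g: "good N" and x: "x \<in> c00" and y: "y \<in> c00"
  shows "tnorm N m (\<lambda>i. x i + y i) \<le> tnorm N m x + tnorm N m y"
proof (rule tn_least)
  fix F assume b: "block_seq m F"
  have "(\<Sum>i=1..m. N (restr (F i) (\<lambda>i. x i + y i)))
      \<le> (\<Sum>i=1..m. N (restr (F i) x)) + (\<Sum>i=1..m. N (restr (F i) y))"
    unfolding restr_add sum.distrib[symmetric]
    by (rule sum_mono) (rule goodD(4)[OF g c00_restr[OF x] c00_restr[OF y]])
  then have "(\<Sum>i=1..m. N (restr (F i) (\<lambda>i. x i + y i))) / real m
      \<le> (\<Sum>i=1..m. N (restr (F i) x)) / real m + (\<Sum>i=1..m. N (restr (F i) y)) / real m"
  proof -
    fix A B C :: real assume "A \<le> B + C"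
    then have "A / real m \<le> (B + C) / real m" by (rule divide_right_mono) simp
    then show "A / real m \<le> B / real m + C / real m" by (simp add: add_divide_distrib)
  qed
  also have "\<dots> \<le> tnorm N m x + tnorm N m y"
    by (intro add_mono tn_upper[OF g _ b] x y)
  finally show "(\<Sum>i=1..m. N (restr (F i) (\<lambda>i. x i + y i))) / real m \<le> tnorm N m x + tnorm N m y" .
qed

lemma tn_mono:
  assumes g: "good N" and g': "good N'" and le: "\<And>z. z \<in> c00 \<Longrightarrow> N z \<le> N' z" and y: "y \<in> c00"
  shows "tnorm N m y \<le> tnorm N' m y"
proof (rule tn_least)
  fix F assume b: "block_seq m F"
  have "(\<Sum>i=1..m. N (restr (F i) y)) \<le> (\<Sum>i=1..m. N' (restr (F i) y))"
    by (rule sum_mono) (rule le[OF c00_restr[OF y]])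
  then have "(\<Sum>i=1..m. N (restr (F i) y)) / real m \<le> (\<Sum>i=1..m. N' (restr (F i) y)) / real m"
    by (simp add: divide_right_mono)
  also have "\<dots> \<le> tnorm N' m y" by (rule tn_upper[OF g' y b])
  finally show "(\<Sum>i=1..m. N (restr (F i) y)) / real m \<le> tnorm N' m y" .
qed


lemma fdef_ge1: "1 \<le> k \<Longrightarrow> 1 \<le> fdef (real k)"
  unfolding fdef_def by simp

abbreviation AE where
  "AE N x k m E \<equiv> (\<Sum>i=1..k. tnorm N (m i) (restr (E i) x)) / fdef (real k)"

lemma adm_mem: "z \<in> adm_set N x \<longleftrightarrow> (\<exists>k m E. z = AE N x k m E \<and> admissible k m E)"
  unfolding adm_set_def by auto

lemma adm_ex: "admissible 1 (\<lambda>_. 2) (\<lambda>_. {0})"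
  unfolding admissible_def block_seq_def by auto

lemma ae_elem:
  assumes g: "good N" and x: "x \<in> c00" and a: "admissible k m E"
  shows "0 \<le> AE N x k m E" "AE N x k m E \<le> l1 x"
proof -
  have k: "1 \<le> k" and b: "block_seq k E" using a unfolding admissible_def by auto
  have f: "1 \<le> fdef (real k)" by (rule fdef_ge1[OF k])
  have nn: "0 \<le> (\<Sum>i=1..k. tnorm N (m i) (restr (E i) x))"
    by (rule sum_nonneg) (rule tn_nonneg[OF g c00_restr[OF x]])
  then show "0 \<le> AE N x k m E" using f by simp
  have "(\<Sum>i=1..k. tnorm N (m i) (restr (E i) x)) \<le> (\<Sum>i=1..k. l1 (restr (E i) x))"
    by (rule sum_mono) (rule tn_l1[OF g c00_restr[OF x]])
  also have "\<dots> \<le> l1 x" by (rule l1_block[OF b x])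
  finally have le: "(\<Sum>i=1..k. tnorm N (m i) (restr (E i) x)) \<le> l1 x" .
  have "AE N x k m E \<le> (\<Sum>i=1..k. tnorm N (m i) (restr (E i) x))"
    using nn f by (simp add: divide_le_eq mult_le_cancel_left1)
  then show "AE N x k m E \<le> l1 x" using le by linarith
qed

lemma adm_bdd: assumes g: "good N" and x: "x \<in> c00" shows "bdd_above (adm_set N x)"
proof (rule bdd_aboveI)
  fix z assume "z \<in> adm_set N x"
  then obtain k m E where z: "z = AE N x k m E" and a: "admissible k m E" unfolding adm_mem by blast
  show "z \<le> l1 x" unfolding z by (rule ae_elem(2)[OF g x a])
qed

lemma adm_upper: "good N \<Longrightarrow> x \<in> c00 \<Longrightarrow> admissible k m E \<Longrightarrow> AE N x k m E \<le> Sup (adm_set N x)"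
  by (rule cSup_upper) (auto simp: adm_mem adm_bdd)

lemma adm_least:
  assumes "\<And>k m E. admissible k m E \<Longrightarrow> AE N x k m E \<le> B"
  shows "Sup (adm_set N x) \<le> B"
proof (rule cSup_least)
  have "AE N x 1 (\<lambda>_. 2) (\<lambda>_. {0}) \<in> adm_set N x" unfolding adm_mem
    by (rule exI, rule exI, rule exI, rule conjI[OF refl adm_ex])
  then show "adm_set N x \<noteq> {}" by blast
qed (use assms in \<open>auto simp: adm_mem\<close>)

definition Phi :: "((nat \<Rightarrow> real) \<Rightarrow> real) \<Rightarrow> (nat \<Rightarrow> real) \<Rightarrow> real" where
  "Phi N x = max (supnorm x) (Sup (adm_set N x))"

lemma supnorm_scale_le: "x \<in> c00 \<Longrightarrow> supnorm (\<lambda>i. c * x i) \<le> \<bar>c\<bar> * supnorm x"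
  by (rule supnorm_le) (auto simp: c00_scale supnorm_nonneg abs_mult supnorm_ge mult_left_mono)

lemma supnorm_tri: "x \<in> c00 \<Longrightarrow> y \<in> c00 \<Longrightarrow> supnorm (\<lambda>i. x i + y i) \<le> supnorm x + supnorm y"
  by (rule supnorm_le)
    (auto simp: c00_add supnorm_nonneg intro!: order_trans[OF abs_triangle_ineq] add_mono supnorm_ge)

lemma good_supnorm: "good supnorm"
  unfolding good_def
  by (auto simp: supnorm_le_l1 supnorm_tri intro!: homog_from_le[where T=supnorm]
      supnorm_nonneg supnorm_scale_le)

lemma adm_scale_le:
  assumes g: "good N" and x: "x \<in> c00"
  shows "Sup (adm_set N (\<lambda>i. c * x i)) \<le> \<bar>c\<bar> * Sup (adm_set N x)"
proof (rule adm_least)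
  fix k m E assume a: "admissible k m E"
  have f: "0 < fdef (real k)" using fdef_ge1[of k] a unfolding admissible_def by auto
  have "(\<Sum>i=1..k. tnorm N (m i) (restr (E i) (\<lambda>i. c * x i)))
     \<le> (\<Sum>i=1..k. \<bar>c\<bar> * tnorm N (m i) (restr (E i) x))"
    unfolding restr_scale by (rule sum_mono) (rule tn_scale_le[OF g c00_restr[OF x]])
  then have "AE N (\<lambda>i. c * x i) k m E \<le> \<bar>c\<bar> * AE N x k m E"
    using f by (simp add: sum_distrib_left[symmetric] divide_right_mono)
  also have "\<dots> \<le> \<bar>c\<bar> * Sup (adm_set N x)"
    by (rule mult_left_mono[OF adm_upper[OF g x a]]) simp
  finally show "AE N (\<lambda>i. c * x i) k m E \<le> \<bar>c\<bar> * Sup (adm_set N x)" .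
qed

lemma adm_tri:
  assumes g: "good N" and x: "x \<in> c00" and y: "y \<in> c00"
  shows "Sup (adm_set N (\<lambda>i. x i + y i)) \<le> Sup (adm_set N x) + Sup (adm_set N y)"
proof (rule adm_least)
  fix k m E assume a: "admissible k m E"
  have f: "0 < fdef (real k)" using fdef_ge1[of k] a unfolding admissible_def by auto
  have "(\<Sum>i=1..k. tnorm N (m i) (restr (E i) (\<lambda>i. x i + y i)))
     \<le> (\<Sum>i=1..k. tnorm N (m i) (restr (E i) x)) + (\<Sum>i=1..k. tnorm N (m i) (restr (E i) y))"
    unfolding restr_add sum.distrib[symmetric]
    by (rule sum_mono) (rule tn_tri[OF g c00_restr[OF x] c00_restr[OF y]])
  then have "AE N (\<lambda>i. x i + y i) k m E \<le> AE N x k m E + AE N y k m E"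
  proof -
    fix A B C :: real assume "A \<le> B + C"
    then have "A / fdef (real k) \<le> (B + C) / fdef (real k)" by (rule divide_right_mono) (use f in simp)
    then show "A / fdef (real k) \<le> B / fdef (real k) + C / fdef (real k)" by (simp add: add_divide_distrib)
  qed
  also have "\<dots> \<le> Sup (adm_set N x) + Sup (adm_set N y)"
    by (intro add_mono adm_upper[OF g _ a] x y)
  finally show "AE N (\<lambda>i. x i + y i) k m E \<le> Sup (adm_set N x) + Sup (adm_set N y)" .
qed

lemma adm_mono:
  assumes g: "good N" and g': "good N'" and le: "\<And>z. z \<in> c00 \<Longrightarrow> N z \<le> N' z" and x: "x \<in> c00"
  shows "Sup (adm_set N x) \<le> Sup (adm_set N' x)"
proof (rule adm_least)
  fix k m E assume a: "admissible k m E"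
  have f: "0 < fdef (real k)" using fdef_ge1[of k] a unfolding admissible_def by auto
  have "(\<Sum>i=1..k. tnorm N (m i) (restr (E i) x)) \<le> (\<Sum>i=1..k. tnorm N' (m i) (restr (E i) x))"
    by (rule sum_mono) (rule tn_mono[OF g g' le c00_restr[OF x]])
  then have "AE N x k m E \<le> AE N' x k m E" using f by (simp add: divide_right_mono)
  also have "\<dots> \<le> Sup (adm_set N' x)" by (rule adm_upper[OF g' x a])
  finally show "AE N x k m E \<le> Sup (adm_set N' x)" .
qed

lemma adm_l1: "good N \<Longrightarrow> x \<in> c00 \<Longrightarrow> Sup (adm_set N x) \<le> l1 x"
  by (rule adm_least) (rule ae_elem(2))

lemma Phi_nonneg: "x \<in> c00 \<Longrightarrow> 0 \<le> Phi N x"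
  unfolding Phi_def using supnorm_nonneg by (simp add: max.coboundedI1)

lemma Phi_scale_le: "good N \<Longrightarrow> x \<in> c00 \<Longrightarrow> Phi N (\<lambda>i. c * x i) \<le> \<bar>c\<bar> * Phi N x"
proof -
  assume g: "good N" and x: "x \<in> c00"
  have "supnorm (\<lambda>i. c * x i) \<le> \<bar>c\<bar> * supnorm x" by (rule supnorm_scale_le[OF x])
  also have "\<dots> \<le> \<bar>c\<bar> * Phi N x" unfolding Phi_def by (rule mult_left_mono) auto
  finally have 1: "supnorm (\<lambda>i. c * x i) \<le> \<bar>c\<bar> * Phi N x" .
  have "Sup (adm_set N (\<lambda>i. c * x i)) \<le> \<bar>c\<bar> * Sup (adm_set N x)" by (rule adm_scale_le[OF g x])
  also have "\<dots> \<le> \<bar>c\<bar> * Phi N x" unfolding Phi_def by (rule mult_left_mono) auto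
  finally have 2: "Sup (adm_set N (\<lambda>i. c * x i)) \<le> \<bar>c\<bar> * Phi N x" .
  show ?thesis using 1 2 unfolding Phi_def[of N "\<lambda>i. c * x i"] by simp
qed


lemma Phi_good: assumes g: "good N" shows "good (Phi N)"
  unfolding good_def
proof (intro ballI conjI allI)
  fix x assume x: "x \<in> c00"
  show "supnorm x \<le> Phi N x" unfolding Phi_def by simp
  show "Phi N x \<le> l1 x" unfolding Phi_def using supnorm_le_l1[OF x] adm_l1[OF g x] by simp
  fix c
  show "Phi N (\<lambda>i. c * x i) = \<bar>c\<bar> * Phi N x"
    by (rule homog_from_le[OF Phi_nonneg Phi_scale_le[OF g] x])
next
  fix x y assume x: "x \<in> c00" and y: "y \<in> c00"
  have a: "supnorm x \<le> Phi N x" "supnorm y \<le> Phi N y"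
    "Sup (adm_set N x) \<le> Phi N x" "Sup (adm_set N y) \<le> Phi N y" unfolding Phi_def by simp_all
  have 1: "supnorm (\<lambda>i. x i + y i) \<le> Phi N x + Phi N y"
    using supnorm_tri[OF x y] a by linarith
  have 2: "Sup (adm_set N (\<lambda>i. x i + y i)) \<le> Phi N x + Phi N y"
    using adm_tri[OF g x y] a by linarith
  show "Phi N (\<lambda>i. x i + y i) \<le> Phi N x + Phi N y"
    using 1 2 unfolding Phi_def[of N "\<lambda>i. x i + y i"] by simp
qed

lemma Phi_mono:
  assumes "good N" "good N'" "\<And>z. z \<in> c00 \<Longrightarrow> N z \<le> N' z" "x \<in> c00"
  shows "Phi N x \<le> Phi N' x"
  unfolding Phi_def using adm_mono[OF assms] by (simp add: max.coboundedI2)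

definition SS :: "((nat \<Rightarrow> real) \<Rightarrow> real) set" where
  "SS = {N. good N \<and> (\<forall>x\<in>c00. N x \<le> Phi N x)}"

definition MM :: "(nat \<Rightarrow> real) \<Rightarrow> real" where
  "MM x = Sup ((\<lambda>N. N x) ` SS)"

lemma supnorm_SS: "supnorm \<in> SS"
  unfolding SS_def Phi_def using good_supnorm by auto

lemma SS_bdd: "x \<in> c00 \<Longrightarrow> bdd_above ((\<lambda>N. N x) ` SS)"
  by (rule bdd_aboveI[where M="l1 x"]) (auto simp: SS_def intro: goodD(2))

lemma MM_upper: "N \<in> SS \<Longrightarrow> x \<in> c00 \<Longrightarrow> N x \<le> MM x"
  unfolding MM_def by (rule cSup_upper) (auto intro: SS_bdd)

lemma MM_least: "(\<And>N. N \<in> SS \<Longrightarrow> N x \<le> B) \<Longrightarrow> MM x \<le> B"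
  unfolding MM_def by (rule cSup_least) (use supnorm_SS in auto)

lemma MM_good: "good MM"
  unfolding good_def
proof (intro ballI conjI allI)
  fix x assume x: "x \<in> c00"
  show "supnorm x \<le> MM x" by (rule MM_upper[OF supnorm_SS x])
  show "MM x \<le> l1 x" by (rule MM_least) (auto simp: SS_def intro: goodD(2)[OF _ x])
  fix c
  show "MM (\<lambda>i. c * x i) = \<bar>c\<bar> * MM x"
  proof (rule homog_from_le[OF _ _ x])
    fix z :: "nat \<Rightarrow> real" assume z: "z \<in> c00"
    show "0 \<le> MM z" using MM_upper[OF supnorm_SS z] supnorm_nonneg[OF z] by linarith
    fix d
    show "MM (\<lambda>i. d * z i) \<le> \<bar>d\<bar> * MM z"
    proof (rule MM_least)
      fix N assume N: "N \<in> SS"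
      then have g: "good N" by (simp add: SS_def)
      show "N (\<lambda>i. d * z i) \<le> \<bar>d\<bar> * MM z"
        unfolding goodD(3)[OF g z] by (rule mult_left_mono[OF MM_upper[OF N z]]) simp
    qed
  qed
next
  fix x y assume x: "x \<in> c00" and y: "y \<in> c00"
  show "MM (\<lambda>i. x i + y i) \<le> MM x + MM y"
  proof (rule MM_least)
    fix N assume N: "N \<in> SS"
    then have g: "good N" by (simp add: SS_def)
    show "N (\<lambda>i. x i + y i) \<le> MM x + MM y"
      using goodD(4)[OF g x y] MM_upper[OF N x] MM_upper[OF N y] by linarith
  qed
qed

lemma MM_le_Phi: "x \<in> c00 \<Longrightarrow> MM x \<le> Phi MM x"
proof (rule MM_least)
  fix N assume N: "N \<in> SS" and x: "x \<in> c00"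
  then have g: "good N" and le: "N x \<le> Phi N x" by (auto simp: SS_def)
  have "Phi N x \<le> Phi MM x" by (rule Phi_mono[OF g MM_good MM_upper[OF N] x])
  then show "N x \<le> Phi MM x" using le by linarith
qed

lemma Phi_MM_SS: "Phi MM \<in> SS"
  unfolding SS_def
  using Phi_good[OF MM_good] Phi_mono[OF MM_good Phi_good[OF MM_good] MM_le_Phi] by auto

lemma MM_fix: "x \<in> c00 \<Longrightarrow> MM x = Phi MM x"
  using MM_le_Phi MM_upper[OF Phi_MM_SS] by (meson order_antisym)

theorem proposition2p3:
  shows "\<exists>N. is_norm_c00 N \<and>
           (\<forall>x\<in>c00. bdd_above (adm_set N x) \<and>
                     N x = max (supnorm x) (Sup (adm_set N x)))"
proof (intro exI conjI ballI)
  show "is_norm_c00 MM"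
    unfolding is_norm_c00_def
  proof (intro conjI ballI allI)
    fix x assume x: "x \<in> c00"
    show "0 \<le> MM x" using goodD(5)[OF MM_good x] .
    show "MM x = 0 \<longleftrightarrow> x = (\<lambda>_. 0)"
    proof
      assume "MM x = 0"
      then have "supnorm x = 0" using goodD(1)[OF MM_good x] supnorm_nonneg[OF x] by linarith
      then show "x = (\<lambda>_. 0)" by (rule supnorm_zero[OF x])
    next
      assume "x = (\<lambda>_. 0)"
      then have "x = (\<lambda>i. 0 * x i)" by simp
      then show "MM x = 0" using goodD(3)[OF MM_good x, of 0] by simp
    qed
    fix c show "MM (\<lambda>i. c * x i) = \<bar>c\<bar> * MM x" by (rule goodD(3)[OF MM_good x])
  next
    fix x y assume "x \<in> c00" "y \<in> c00"
    then show "MM (\<lambda>i. x i + y i) \<le> MM x + MM y" by (rule goodD(4)[OF MM_good])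
  qed
next
  fix x assume x: "x \<in> c00"
  show "bdd_above (adm_set MM x)" by (rule adm_bdd[OF MM_good x])
  show "MM x = max (supnorm x) (Sup (adm_set MM x))" using MM_fix[OF x] by (simp add: Phi_def)
qed

end
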